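(* Let $Q$ be a convex polygon with finitely many sides and perimeter $L$. Parametrize its boundary by arc length $s$, let $P(s)$ be the boundary point at parameter $s$ and $P'(s)=P(s+L/2)$ its antipodal point, and let $\alpha(s)$ be the area of the part of $Q$ to the left of the directed line $P(s)P'(s)$ minus the area of the part to its right. Then the set of zeros of $\alpha$ (in one period of $s$) is a finite union of points and closed intervals. *)

theory Defs
  imports "HOL-Analysis.Analysis"
begin

text \<open>Planar points are vectors in real^2.  cross u w is the z-component of
the cross product; cross u w > 0 means w lies strictly to the left of u.\<close>
definition cross :: "real^2 \<Rightarrow> real^2 \<Rightarrow> real" where
  "cross u w = u$1 * w$2 - u$2 * w$1"

text \<open>A convex polygon is given by its list of vertices, listed
counterclockwise, in strictly convex position (every other vertex lies
strictly to the left of each directed edge).\<close>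
definition vtx :: "(real^2) list \<Rightarrow> nat \<Rightarrow> real^2" where
  "vtx vs i = vs ! (i mod length vs)"

definition convex_polygon_vertices :: "(real^2) list \<Rightarrow> bool" where
  "convex_polygon_vertices vs \<longleftrightarrow> length vs \<ge> 3 \<and>
     (\<forall>i < length vs. \<forall>j < length vs. j \<noteq> i \<and> j \<noteq> Suc i mod length vs \<longrightarrow>
        cross (vtx vs (Suc i) - vtx vs i) (vtx vs j - vtx vs i) > 0)"

definition polygon :: "(real^2) list \<Rightarrow> (real^2) set" where
  "polygon vs = convex hull (set vs)"

definition edge_len :: "(real^2) list \<Rightarrow> nat \<Rightarrow> real" where
  "edge_len vs i = norm (vtx vs (Suc i) - vtx vs i)"

definition cum_len :: "(real^2) list \<Rightarrow> nat \<Rightarrow> real" where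
  "cum_len vs k = (\<Sum>i<k. edge_len vs i)"

definition perimeter :: "(real^2) list \<Rightarrow> real" where
  "perimeter vs = cum_len vs (length vs)"

text \<open>Arc-length parametrization of the boundary, starting at vertex 0,
counterclockwise, extended L-periodically to all of the reals.\<close>
definition bdry_point :: "(real^2) list \<Rightarrow> real \<Rightarrow> real^2" where
  "bdry_point vs s =
     (let L = perimeter vs;
          t = s - L * of_int \<lfloor>s / L\<rfloor>;
          k = (GREATEST k. k < length vs \<and> cum_len vs k \<le> t)
      in vtx vs k + ((t - cum_len vs k) / edge_len vs k) *\<^sub>R (vtx vs (Suc k) - vtx vs k))"

text \<open>The arc-length
parameter may start at an arbitrary boundary point (offset s0).\<close>
definition area_diff :: "(real^2) list \<Rightarrow> real \<Rightarrow> real \<Rightarrow> real" where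
  "area_diff vs s0 s =
     (let L = perimeter vs;
          P = bdry_point vs (s0 + s);
          P' = bdry_point vs (s0 + s + L / 2)
      in measure lebesgue (polygon vs \<inter> {x. cross (P' - P) (x - P) > 0})
       - measure lebesgue (polygon vs \<inter> {x. cross (P' - P) (x - P) < 0}))"

end

theory Submission
  imports Defs
begin



lemma cross_comp: "cross u w = u$1 * w$2 - u$2 * w$1" by (simp add: cross_def)

lemma cross_add1[simp]: "cross (a + b) w = cross a w + cross b w"
  by (simp add: cross_def algebra_simps)
lemma cross_add2[simp]: "cross w (a + b) = cross w a + cross w b"
  by (simp add: cross_def algebra_simps)
lemma cross_diff1[simp]: "cross (a - b) w = cross a w - cross b w"
  by (simp add: cross_def algebra_simps)
lemma cross_diff2[simp]: "cross w (a - b) = cross w a - cross w b"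
  by (simp add: cross_def algebra_simps)
lemma cross_scale1[simp]: "cross (c *\<^sub>R a) w = c * cross a w"
  by (simp add: cross_def algebra_simps)
lemma cross_scale2[simp]: "cross w (c *\<^sub>R a) = c * cross w a"
  by (simp add: cross_def algebra_simps)
lemma cross_self[simp]: "cross a a = 0"
  by (simp add: cross_def algebra_simps)
lemma cross_zero1[simp]: "cross 0 a = 0" and cross_zero2[simp]: "cross a 0 = 0"
  by (simp_all add: cross_def)
lemma cross_minus1[simp]: "cross (-a) w = - cross a w" and cross_minus2[simp]: "cross w (-a) = - cross w a"
  by (simp_all add: cross_def)
lemma cross_anti: "cross a b = - cross b a"
  by (simp add: cross_def algebra_simps)

lemma grassmann: "cross u y * cross x z = cross u x * cross y z + cross u z * cross x y"
  by (simp add: cross_def algebra_simps)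

lemma tri_in:
  assumes C1: "cross (a - P) (x - P) \<ge> 0" and C2: "cross (b - a) (x - a) \<ge> 0"
    and C3: "cross (b - P) (x - P) < 0"
  shows "x \<in> convex hull {P, a, b}"
proof -
  define D where "D = cross (a - P) (b - P)"
  have DE: "D = cross (a - P) (x - P) + cross (b - a) (x - a) - cross (b - P) (x - P)"
    unfolding D_def by (simp add: cross_def algebra_simps)
  have Dp: "D > 0" using C1 C2 C3 DE by linarith
  define p1 where "p1 = cross (b - a) (x - a) / D"
  define p2 where "p2 = - cross (b - P) (x - P) / D"
  define p3 where "p3 = cross (a - P) (x - P) / D"
  have id: "D *\<^sub>R x = cross (b - a) (x - a) *\<^sub>R P + (- cross (b - P) (x - P)) *\<^sub>R a + cross (a - P) (x - P) *\<^sub>R b"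
    unfolding D_def by (simp add: vec_eq_iff forall_2 cross_def) (simp add: algebra_simps)
  have "x = p1 *\<^sub>R P + p2 *\<^sub>R a + p3 *\<^sub>R b"
  proof -
    have "x = (1/D) *\<^sub>R (D *\<^sub>R x)" using Dp by simp
    also have "\<dots> = p1 *\<^sub>R P + p2 *\<^sub>R a + p3 *\<^sub>R b"
      unfolding id p1_def p2_def p3_def by (simp add: scaleR_add_right divide_inverse mult.commute)
    finally show ?thesis .
  qed
  moreover have "p1 \<ge> 0" "p2 \<ge> 0" "p3 \<ge> 0"
    using Dp C1 C2 C3 unfolding p1_def p2_def p3_def by auto
  moreover have "p1 + p2 + p3 = 1"
  proof -
    have "p1 + p2 + p3 = (cross (b - a) (x - a) - cross (b - P) (x - P) + cross (a - P) (x - P)) / D"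
      unfolding p1_def p2_def p3_def by (simp add: add_divide_distrib diff_divide_distrib)
    also have "\<dots> = D / D" using DE by (simp add: algebra_simps)
    finally show ?thesis using Dp by simp
  qed
  ultimately show ?thesis unfolding convex_hull_3 by blast
qed

lemma tri_sub:
  assumes "cross (a - P) (b - P) \<ge> 0" and "y \<in> convex hull {P, a, b}"
  shows "cross (a - P) (y - P) \<ge> 0 \<and> cross (b - P) (y - P) \<le> 0"
proof -
  obtain u v w where y: "y = u *\<^sub>R P + v *\<^sub>R a + w *\<^sub>R b" and uvw: "0 \<le> u" "0 \<le> v" "0 \<le> w" "u + v + w = 1"
    using assms(2) unfolding convex_hull_3 by blast
  have u: "u = 1 - v - w" using uvw by simp
  have e1: "cross (a - P) (y - P) = w * cross (a - P) (b - P)"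
    unfolding y u by (simp add: cross_def algebra_simps)
  have e2: "cross (b - P) (y - P) = - v * cross (a - P) (b - P)"
    unfolding y u by (simp add: cross_def algebra_simps)
  show ?thesis using e1 e2 uvw assms(1) by (simp add: mult_nonneg_nonneg)
qed

lemma tri_measure:
  "measure lebesgue (convex hull {P, a, b :: real^2}) = \<bar>cross (a - P) (b - P)\<bar> / 2"
proof -
  have c: "compact (convex hull {P, a, b})" by (simp add: finite_imp_compact_convex_hull)
  then have "convex hull {P,a,b} \<in> sets lborel" by (simp add: borel_compact)
  then have "measure lebesgue (convex hull {P, a, b}) = measure lborel (convex hull {P,a,b})"
    by simp
  also have "\<dots> = \<bar>cross (a - P) (b - P)\<bar> / 2"
    by (subst content_triangle) (simp add: cross_def abs_minus_commute algebra_simps)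
  finally show ?thesis .
qed




lemma cpv_len: "convex_polygon_vertices vs \<Longrightarrow> length vs \<ge> 3"
  by (simp add: convex_polygon_vertices_def)

lemma vtx_mod: "vtx vs (i mod length vs) = vtx vs i"
  by (simp add: vtx_def)

lemma vtx_add_n[simp]: "vtx vs (i + length vs) = vtx vs i"
  by (simp add: vtx_def)

lemma modneq:
  fixes n :: nat
  assumes "a < n" "b < n" "a \<noteq> b" shows "(c + a) mod n \<noteq> (c + b) mod n"
proof
  assume h: "(c + a) mod n = (c + b) mod n"
  show False
  proof (cases "a < b")
    case True
    then have "n dvd (c + b) - (c + a)" using h mod_eq_dvd_iff_nat[of "c+a" "c+b" n] by simp
    then have "n dvd b - a" by simp
    then show False using True assms by (metis diff_less_Suc dvd_imp_le less_Suc_eq_le not_less zero_less_diff less_imp_diff_less)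
  next
    case False
    then have "b < a" using assms by simp
    then have "n dvd (c + a) - (c + b)" using h mod_eq_dvd_iff_nat[of "c+b" "c+a" n] by simp
    then have "n dvd a - b" by simp
    then show False using \<open>b < a\<close> assms by (metis dvd_imp_le less_imp_diff_less not_less zero_less_diff)
  qed
qed

lemma edge_gen:
  assumes cpv: "convex_polygon_vertices vs"
    and "j mod length vs \<noteq> i mod length vs" "j mod length vs \<noteq> Suc i mod length vs"
  shows "cross (vtx vs (Suc i) - vtx vs i) (vtx vs j - vtx vs i) > 0"
proof -
  let ?n = "length vs"
  have n: "?n \<ge> 3" using cpv_len[OF cpv] .
  have "cross (vtx vs (Suc (i mod ?n)) - vtx vs (i mod ?n)) (vtx vs (j mod ?n) - vtx vs (i mod ?n)) > 0"
  proof -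
    have all: "\<forall>i < ?n. \<forall>j < ?n. j \<noteq> i \<and> j \<noteq> Suc i mod ?n \<longrightarrow>
        cross (vtx vs (Suc i) - vtx vs i) (vtx vs j - vtx vs i) > 0"
      using cpv unfolding convex_polygon_vertices_def by blast
    have p: "?n > 0" using n by linarith
    have "j mod ?n \<noteq> Suc (i mod ?n) mod ?n" using assms(3) by (simp add: mod_Suc_eq)
    then show ?thesis using all[rule_format, of "i mod ?n" "j mod ?n"] assms(2) p by simp
  qed
  moreover have "vtx vs (Suc (i mod ?n)) = vtx vs (Suc i)"
    by (simp add: vtx_def mod_Suc_eq)
  ultimately show ?thesis by (simp add: vtx_mod)
qed

lemma edge_pos:
  assumes cpv: "convex_polygon_vertices vs" and "1 < a" "a < length vs"
  shows "cross (vtx vs (Suc c) - vtx vs c) (vtx vs (c + a) - vtx vs c) > 0"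
proof (rule edge_gen[OF cpv])
  have n: "length vs > 0" using cpv_len[OF cpv] by linarith
  show "(c + a) mod length vs \<noteq> c mod length vs"
    using modneq[of a "length vs" 0 c] assms n by simp
  show "(c + a) mod length vs \<noteq> Suc c mod length vs"
    using modneq[of a "length vs" 1 c] assms n by simp
qed

lemma consec_pos:
  assumes cpv: "convex_polygon_vertices vs" and "1 \<le> a" "a + 2 \<le> length vs"
  shows "cross (vtx vs (c + a) - vtx vs c) (vtx vs (c + Suc a) - vtx vs c) > 0"
proof -
  let ?n = "length vs"
  have "cross (vtx vs (Suc (c + a)) - vtx vs (c + a)) (vtx vs ((c + a) + (?n - a)) - vtx vs (c + a)) > 0"
    using edge_pos[OF cpv, of "?n - a" "c + a"] assms by simp
  moreover have "(c + a) + (?n - a) = c + ?n" using assms by simp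
  ultimately have "cross (vtx vs (Suc (c + a)) - vtx vs (c + a)) (vtx vs c - vtx vs (c + a)) > 0"
    by simp
  then show ?thesis by (simp add: cross_def algebra_simps)
qed

lemma chord_strict:
  assumes cpv: "convex_polygon_vertices vs" and "1 \<le> a" "a < b" "b < length vs"
  shows "cross (vtx vs (c + a) - vtx vs c) (vtx vs (c + b) - vtx vs c) > 0"
  using assms(3,4)
proof (induction b rule: less_induct)
  case (less b)
  let ?x = "\<lambda>k. vtx vs (c + k) - vtx vs c"
  show ?case
  proof (cases "a = 1")
    case True
    then show ?thesis using edge_pos[OF cpv, of b c] less by simp
  next
    case False
    then have a2: "a \<ge> 2" using assms by simp
    show ?thesis
    proof (cases "b = Suc a")
      case True
      then show ?thesis using consec_pos[OF cpv, of a c] less assms by simp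
    next
      case False
      then obtain b' where b': "b = Suc b'" "a < b'" using less by (cases b) auto
      have h1: "cross (?x a) (?x b') > 0" using less.IH[of b'] b' less by simp
      have h2: "cross (?x b') (?x b) > 0" using consec_pos[OF cpv, of b' c] b' less a2 by simp
      have u1: "cross (?x 1) (?x a) > 0" using edge_pos[OF cpv, of a c] a2 b' less by simp
      have u2: "cross (?x 1) (?x b') > 0" using edge_pos[OF cpv, of b' c] a2 b' less by simp
      have u3: "cross (?x 1) (?x b) > 0" using edge_pos[OF cpv, of b c] a2 b' less by simp
      have g: "cross (?x 1) (?x b') * cross (?x a) (?x b) = cross (?x 1) (?x a) * cross (?x b') (?x b) + cross (?x 1) (?x b) * cross (?x a) (?x b')"
        by (rule grassmann)
      have "cross (?x 1) (?x b') * cross (?x a) (?x b) > 0"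
        unfolding g using h1 h2 u1 u3 by (simp add: add_pos_pos)
      then show ?thesis using u2 by (simp add: zero_less_mult_iff)
    qed
  qed
qed

lemma chord_nonneg:
  assumes cpv: "convex_polygon_vertices vs" and "a \<le> b" "b \<le> length vs \<or> a = length vs"
  shows "cross (vtx vs (c + a) - vtx vs c) (vtx vs (c + b) - vtx vs c) \<ge> 0"
proof -
  let ?n = "length vs"
  consider "a = 0" | "a = ?n" | "a = b" | "b = ?n" | "1 \<le> a \<and> a < b \<and> b < ?n"
    using assms by linarith
  then show ?thesis
  proof cases
    case 1 then show ?thesis by simp
  next
    case 2
    have "c + a = c + ?n" using 2 by simp
    then show ?thesis by simp
  next
    case 3 then show ?thesis by simp
  next
    case 4
    have "c + b = c + ?n" using 4 by simp
    then show ?thesis by simp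
  next
    case 5 then show ?thesis using chord_strict[OF cpv, of a b c] by simp
  qed
qed

lemma vtx_in_set: "vs \<noteq> [] \<Longrightarrow> vtx vs i \<in> set vs"
  by (simp add: vtx_def)

lemma set_vtx: "x \<in> set vs \<Longrightarrow> \<exists>j < length vs. x = vtx vs j"
  by (metis in_set_conv_nth mod_less vtx_def)

lemma halfplane_convex: "convex {x. 0 \<le> cross e (x - v)}"
proof (rule convexI)
  fix x y :: "real^2" and u w :: real
  assume "x \<in> {x. 0 \<le> cross e (x - v)}" "y \<in> {x. 0 \<le> cross e (x - v)}" "0 \<le> u" "0 \<le> w" "u + w = 1"
  moreover have "cross e (u *\<^sub>R x + w *\<^sub>R y - v) = u * cross e (x - v) + w * cross e (y - v)"
  proof -
    have u: "u = 1 - w" using \<open>u + w = 1\<close> by simp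
    show ?thesis unfolding u by (simp add: cross_def algebra_simps)
  qed
  ultimately show "u *\<^sub>R x + w *\<^sub>R y \<in> {x. 0 \<le> cross e (x - v)}"
    by (simp del: cross_diff1 cross_diff2 add: add_nonneg_nonneg mult_nonneg_nonneg)
qed

lemma in_poly_edge:
  assumes cpv: "convex_polygon_vertices vs" and x: "x \<in> polygon vs"
  shows "cross (vtx vs (Suc k) - vtx vs k) (x - vtx vs k) \<ge> 0"
proof -
  let ?n = "length vs"
  have "set vs \<subseteq> {x. 0 \<le> cross (vtx vs (Suc k) - vtx vs k) (x - vtx vs k)}"
  proof
    fix y assume "y \<in> set vs"
    then obtain j where j: "j < ?n" "y = vtx vs j" using set_vtx by blast
    show "y \<in> {x. 0 \<le> cross (vtx vs (Suc k) - vtx vs k) (x - vtx vs k)}"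
    proof (cases "j mod ?n = k mod ?n \<or> j mod ?n = Suc k mod ?n")
      case True
      then have "vtx vs j = vtx vs k \<or> vtx vs j = vtx vs (Suc k)"
        by (metis vtx_def)
      moreover have "cross (vtx vs (Suc k) - vtx vs k) (vtx vs (Suc k) - vtx vs k) = 0"
        by (rule cross_self)
      ultimately show ?thesis using j by (auto simp del: cross_diff1 cross_diff2)
    next
      case False
      then show ?thesis using edge_gen[OF cpv, of j k] j by auto
    qed
  qed
  then have "convex hull (set vs) \<subseteq> {x. 0 \<le> cross (vtx vs (Suc k) - vtx vs k) (x - vtx vs k)}"
    by (intro hull_minimal halfplane_convex)
  then show ?thesis using x unfolding polygon_def by auto
qed

lemma vtx_in_poly: "convex_polygon_vertices vs \<Longrightarrow> vtx vs i \<in> polygon vs"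
proof -
  assume "convex_polygon_vertices vs"
  then have "vs \<noteq> []" using cpv_len by fastforce
  then show ?thesis unfolding polygon_def by (simp add: hull_inc vtx_in_set)
qed




definition lin :: "real^2 \<Rightarrow> real^2" where "lin w = (\<chi> i. if i = 1 then - w$2 else w$1)"

lemma cross_lin: "cross w (x - P) = lin w \<bullet> x - lin w \<bullet> P"
  by (simp add: lin_def cross_def inner_vec_def sum_2 algebra_simps)

lemma lin_nz: "w \<noteq> 0 \<Longrightarrow> lin w \<noteq> 0"
  by (auto simp: lin_def vec_eq_iff forall_2)

lemma open_cross_lt: "open {x. cross w (x - P) < c}"
proof -
  have "{x. cross w (x - P) < c} = {x. lin w \<bullet> x < c + lin w \<bullet> P}"
    by (auto simp del: cross_diff2 simp add: cross_lin)
  then show ?thesis by (simp add: open_halfspace_lt)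
qed

lemma open_cross_gt: "open {x. cross w (x - P) > c}"
proof -
  have "{x. cross w (x - P) > c} = {x. lin w \<bullet> x > c + lin w \<bullet> P}"
    by (auto simp del: cross_diff2 simp add: cross_lin)
  then show ?thesis by (simp add: open_halfspace_gt)
qed

lemma open_sets_lebesgue: "open (S :: (real^2) set) \<Longrightarrow> S \<in> sets lebesgue"
  by (metis borel_open sets_completionI_sets sets_lborel)

lemma negl_line: "w \<noteq> 0 \<Longrightarrow> negligible {x. cross w (x - P) = 0}"
proof -
  assume "w \<noteq> 0"
  have "{x. cross w (x - P) = 0} = {x. lin w \<bullet> x = lin w \<bullet> P}"
    by (auto simp del: cross_diff2 simp add: cross_lin)
  then show ?thesis using negligible_hyperplane lin_nz \<open>w \<noteq> 0\<close> by metis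
qed




definition fanp :: "(real^2) list \<Rightarrow> nat \<Rightarrow> nat \<Rightarrow> real^2 \<Rightarrow> real^2 \<Rightarrow> nat \<Rightarrow> real^2" where
  "fanp vs I d P P' t = (if t = 0 then P else if t \<le> d then vtx vs (I + t) else P')"

lemma discrete_ivt:
  assumes "Q 0" "\<not> Q (Suc d)" shows "\<exists>t\<le>d. Q t \<and> \<not> Q (Suc t)"
  using assms
proof (induction d)
  case 0 then show ?case by auto
next
  case (Suc d)
  then show ?case by (cases "Q (Suc d)") (auto intro: le_SucI)
qed

lemma cross_affine_base:
  assumes "P = A + l *\<^sub>R (B - A)"
  shows "cross (a - P) (b - P) = (1 - l) * cross (a - A) (b - A) + l * cross (a - B) (b - B)"
  unfolding assms by (simp add: cross_def algebra_simps)

lemma cross_affine_second: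
  "cross (a - P) (a + m *\<^sub>R (b - a) - P) = m * cross (a - P) (b - P)"
  by (simp add: cross_def algebra_simps)

lemma telesc:
  "(\<Sum>t\<le>d. cross (q t - z) (q (Suc t) - z)) = (\<Sum>t\<le>d. cross (q t) (q (Suc t))) - cross (q 0) z + cross (q (Suc d)) z"
  by (induction d) (simp_all add: cross_def algebra_simps)

lemma compact_sets_lebesgue: "compact (S :: (real^2) set) \<Longrightarrow> S \<in> sets lebesgue"
  using lmeasurable_compact fmeasurableD by blast

lemma polygon_compact: "compact (polygon vs)"
  unfolding polygon_def by (simp add: finite_imp_compact_convex_hull)

locale fanconf =
  fixes vs :: "(real^2) list" and I d :: nat and l m :: real and P P' :: "real^2"
  assumes cpv: "convex_polygon_vertices vs"
    and l: "0 \<le> l" "l \<le> 1" and m: "0 \<le> m" "m \<le> 1"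
    and d: "d \<le> length vs" and d0: "d = 0 \<Longrightarrow> l \<le> m"
    and P: "P = vtx vs I + l *\<^sub>R (vtx vs (Suc I) - vtx vs I)"
    and P': "P' = vtx vs (I + d) + m *\<^sub>R (vtx vs (Suc (I + d)) - vtx vs (I + d))"
begin

abbreviation "p \<equiv> fanp vs I d P P'"

lemma C2:
  assumes x: "x \<in> polygon vs" and t: "t \<le> d"
  shows "cross (p (Suc t) - p t) (x - p t) \<ge> 0"
proof -
  have E: "\<And>k. cross (vtx vs (Suc k) - vtx vs k) (x - vtx vs k) \<ge> 0"
    using in_poly_edge[OF cpv x] by blast
  show ?thesis
  proof (cases "t = 0")
    case True
    show ?thesis
    proof (cases "d = 0")
      case True
      have "cross (P' - P) (x - P) = (m - l) * cross (vtx vs (Suc I) - vtx vs I) (x - vtx vs I)"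
        unfolding P P' using True by (simp add: cross_def algebra_simps)
      moreover have "m - l \<ge> 0" using d0 True by simp
      ultimately show ?thesis using \<open>t = 0\<close> True E[of I] by (simp add: fanp_def)
    next
      case False
      have "cross (vtx vs (Suc I) - P) (x - P) = (1 - l) * cross (vtx vs (Suc I) - vtx vs I) (x - vtx vs I)"
        unfolding P by (simp add: cross_def algebra_simps)
      then show ?thesis using \<open>t = 0\<close> False E[of I] l by (simp add: fanp_def)
    qed
  next
    case False
    show ?thesis
    proof (cases "t < d")
      case True
      then show ?thesis using False E[of "I + t"] by (simp add: fanp_def)
    next
      case False
      then have td: "t = d" using t by simp
      have "cross (P' - vtx vs (I + d)) (x - vtx vs (I + d)) = m * cross (vtx vs (Suc (I + d)) - vtx vs (I + d)) (x - vtx vs (I + d))"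
        unfolding P' by (simp add: cross_def algebra_simps)
      then show ?thesis using td \<open>t \<noteq> 0\<close> E[of "I + d"] m by (simp add: fanp_def)
    qed
  qed
qed

lemma cover:
  assumes x: "x \<in> polygon vs" and g: "cross (P' - P) (x - P) < 0"
  shows "\<exists>t\<le>d. x \<in> convex hull {P, p t, p (Suc t)}"
proof -
  let ?Q = "\<lambda>t. cross (p t - P) (x - P) \<ge> 0"
  have "?Q 0" by (simp add: fanp_def)
  moreover have "\<not> ?Q (Suc d)" using g by (simp add: fanp_def)
  ultimately obtain t where t: "t \<le> d" "?Q t" "\<not> ?Q (Suc t)" using discrete_ivt[of ?Q d] by blast
  have "x \<in> convex hull {P, p t, p (Suc t)}"
    by (rule tri_in) (use t C2[OF x t(1)] in auto)
  then show ?thesis using t by blast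
qed

lemma Dnn:
  assumes t: "t \<le> d" shows "cross (p t - P) (p (Suc t) - P) \<ge> 0"
proof -
  have ch: "\<And>a b c. a \<le> b \<Longrightarrow> b \<le> length vs \<or> a = length vs \<Longrightarrow>
      cross (vtx vs (c + a) - vtx vs c) (vtx vs (c + b) - vtx vs c) \<ge> 0"
    using chord_nonneg[OF cpv] by blast
  have key: "\<And>k. 1 \<le> k \<Longrightarrow> k \<le> d \<Longrightarrow>
      cross (vtx vs (I + k) - P) (vtx vs (Suc (I + k)) - P) \<ge> 0"
  proof -
    fix k assume k: "1 \<le> k" "k \<le> d"
    have e: "cross (vtx vs (I + k) - P) (vtx vs (Suc (I + k)) - P) =
      (1 - l) * cross (vtx vs (I + k) - vtx vs I) (vtx vs (I + Suc k) - vtx vs I)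
      + l * cross (vtx vs (Suc I + (k - 1)) - vtx vs (Suc I)) (vtx vs (Suc I + k) - vtx vs (Suc I))"
      using cross_affine_base[OF P] k by simp
    have "cross (vtx vs (I + k) - vtx vs I) (vtx vs (I + Suc k) - vtx vs I) \<ge> 0"
      using ch[of k "Suc k" I] k d by linarith
    moreover have "cross (vtx vs (Suc I + (k - 1)) - vtx vs (Suc I)) (vtx vs (Suc I + k) - vtx vs (Suc I)) \<ge> 0"
      using ch[of "k - 1" k "Suc I"] k d by linarith
    ultimately show "cross (vtx vs (I + k) - P) (vtx vs (Suc (I + k)) - P) \<ge> 0"
      unfolding e using l by (simp add: add_nonneg_nonneg mult_nonneg_nonneg)
  qed
  show ?thesis
  proof (cases "t = 0")
    case True then show ?thesis by (simp add: fanp_def)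
  next
    case False
    show ?thesis
    proof (cases "t < d")
      case True
      then show ?thesis using key[of t] False by (simp add: fanp_def)
    next
      case False
      then have td: "t = d" using t by simp
      have "cross (vtx vs (I + d) - P) (P' - P) = m * cross (vtx vs (I + d) - P) (vtx vs (Suc (I + d)) - P)"
        unfolding P' by (rule cross_affine_second)
      then show ?thesis using td \<open>t \<noteq> 0\<close> key[of d] m by (simp add: fanp_def)
    qed
  qed
qed


definition R2 where
  "R2 = (\<Sum>t<d. cross (vtx vs (I + t)) (vtx vs (Suc (I + t)))) - cross (vtx vs I) P + cross (vtx vs (I + d)) P' + cross P' P"

lemma S1: "(\<Sum>t\<le>d. cross (p t) (p (Suc t))) = (\<Sum>t<d. cross (vtx vs (I + t)) (vtx vs (Suc (I + t)))) - cross (vtx vs I) P + cross (vtx vs (I + d)) P'"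
proof (cases d)
  case 0
  then show ?thesis unfolding P P' by (simp add: fanp_def cross_def algebra_simps)
next
  case (Suc e)
  have a: "(\<Sum>t\<le>d. cross (p t) (p (Suc t))) = (\<Sum>t\<le>e. cross (p t) (p (Suc t))) + cross (vtx vs (I + d)) P'"
    using Suc by (simp add: fanp_def)
  have b: "(\<Sum>t\<le>e. cross (p t) (p (Suc t))) = (\<Sum>t\<le>e. cross (vtx vs (I + t)) (vtx vs (Suc (I + t)))
      + (if t = 0 then cross P (vtx vs (Suc I)) - cross (vtx vs I) (vtx vs (Suc I)) else 0))"
    using Suc by (intro sum.cong) (auto simp: fanp_def)
  have c: "(\<Sum>t\<le>e. (if t = 0 then cross P (vtx vs (Suc I)) - cross (vtx vs I) (vtx vs (Suc I)) else (0::real)))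
      = cross P (vtx vs (Suc I)) - cross (vtx vs I) (vtx vs (Suc I))"
    by (simp add: sum.delta)
  have dd: "cross P (vtx vs (Suc I)) - cross (vtx vs I) (vtx vs (Suc I)) = - cross (vtx vs I) P"
    unfolding P by (simp add: cross_def algebra_simps)
  have e: "(\<Sum>t\<le>e. cross (vtx vs (I + t)) (vtx vs (Suc (I + t)))) = (\<Sum>t<d. cross (vtx vs (I + t)) (vtx vs (Suc (I + t))))"
    using Suc by (simp add: lessThan_Suc_atMost)
  show ?thesis unfolding a b sum.distrib c dd e by simp
qed

lemma fan_sum: "(\<Sum>t\<le>d. cross (p t - P) (p (Suc t) - P)) = R2"
proof -
  have "(\<Sum>t\<le>d. cross (p t - P) (p (Suc t) - P)) = (\<Sum>t\<le>d. cross (p t) (p (Suc t))) - cross (p 0) P + cross (p (Suc d)) P"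
    by (rule telesc)
  also have "\<dots> = R2" unfolding S1 R2_def by (simp add: fanp_def)
  finally show ?thesis .
qed

lemma fan_measure: "measure lebesgue (polygon vs \<inter> {x. cross (P' - P) (x - P) < 0}) \<le> R2 / 2"
proof -
  let ?T = "\<lambda>t. convex hull {P, p t, p (Suc t)}"
  have cT: "\<And>t. compact (?T t)" by (simp add: finite_imp_compact_convex_hull)
  have sub: "polygon vs \<inter> {x. cross (P' - P) (x - P) < 0} \<subseteq> (\<Union>t\<in>{..d}. ?T t)"
    using cover by blast
  have m1: "polygon vs \<inter> {x. cross (P' - P) (x - P) < 0} \<in> sets lebesgue"
    by (intro sets.Int compact_sets_lebesgue polygon_compact open_sets_lebesgue open_cross_lt)
  have m2: "(\<Union>t\<in>{..d}. ?T t) \<in> fmeasurable lebesgue"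
    by (intro lmeasurable_compact compact_UN cT) simp
  have "measure lebesgue (polygon vs \<inter> {x. cross (P' - P) (x - P) < 0}) \<le> measure lebesgue (\<Union>t\<in>{..d}. ?T t)"
    by (rule measure_mono_fmeasurable[OF sub m1 m2])
  also have "\<dots> \<le> (\<Sum>t\<le>d. measure lebesgue (?T t))"
    by (rule measure_UNION_le) (auto intro: compact_sets_lebesgue cT)
  also have "\<dots> = (\<Sum>t\<le>d. cross (p t - P) (p (Suc t) - P) / 2)"
  proof (intro sum.cong refl)
    fix t assume "t \<in> {..d}"
    then have "cross (p t - P) (p (Suc t) - P) \<ge> 0" using Dnn by simp
    then show "measure lebesgue (?T t) = cross (p t - P) (p (Suc t) - P) / 2"
      by (simp only: tri_measure abs_of_nonneg)
  qed
  also have "\<dots> = R2 / 2" by (simp only: sum_divide_distrib[symmetric] fan_sum)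
  finally show ?thesis .
qed

end




definition shoelace :: "(real^2) list \<Rightarrow> real" where
  "shoelace vs = (\<Sum>t<length vs. cross (vtx vs t) (vtx vs (Suc t)))"

lemma vtx_neq:
  assumes cpv: "convex_polygon_vertices vs" and k: "1 \<le> k" "k < length vs"
  shows "vtx vs (c + k) \<noteq> vtx vs c"
proof -
  have n: "length vs \<ge> 3" using cpv_len[OF cpv] .
  show ?thesis
  proof (cases "k < length vs - 1")
    case True
    have "cross (vtx vs (c + k) - vtx vs c) (vtx vs (c + (length vs - 1)) - vtx vs c) > 0"
      using chord_strict[OF cpv, of k "length vs - 1" c] True k by simp
    then show ?thesis by auto
  next
    case False
    have "cross (vtx vs (c + 1) - vtx vs c) (vtx vs (c + k) - vtx vs c) > 0"
      using chord_strict[OF cpv, of 1 k c] False k n by simp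
    then show ?thesis by auto
  qed
qed

lemma poly_lower:
  assumes cpv: "convex_polygon_vertices vs"
  shows "shoelace vs / 2 \<le> measure lebesgue (polygon vs)"
proof -
  let ?n = "length vs"
  have n: "?n \<ge> 3" using cpv_len[OF cpv] .
  let ?d = "?n - 1"
  interpret F: fanconf vs 0 ?d 0 1 "vtx vs 0" "vtx vs 0"
  proof
    show "convex_polygon_vertices vs" by (rule cpv)
    show "vtx vs 0 = vtx vs (0 + ?d) + 1 *\<^sub>R (vtx vs (Suc (0 + ?d)) - vtx vs (0 + ?d))"
    proof -
      have "Suc ?d = 0 + ?n" using n by simp
      then have "vtx vs (Suc (0 + ?d)) = vtx vs 0" by (metis vtx_add_n add_0)
      then show ?thesis by simp
    qed
  qed (use n in auto)
  have pt: "\<And>t. t \<le> ?n \<Longrightarrow> F.p t = vtx vs t"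
  proof -
    fix t assume "t \<le> ?n"
    then show "F.p t = vtx vs t"
      unfolding fanp_def using n by (cases "t = ?n") (auto simp: vtx_def)
  qed
  let ?T = "\<lambda>t. convex hull {vtx vs 0, vtx vs t, vtx vs (Suc t)}"
  have R2: "F.R2 = shoelace vs"
  proof -
    have "Suc (?n - 1) = 0 + ?n" using n by simp
    then have vn: "vtx vs (Suc (?n - 1)) = vtx vs 0" by (metis vtx_add_n)
    have "shoelace vs = (\<Sum>t<Suc ?d. cross (vtx vs t) (vtx vs (Suc t)))"
    proof -
      have nn: "Suc (?n - 1) = ?n" using n by simp
      show ?thesis unfolding shoelace_def by (simp only: nn)
    qed
    also have "\<dots> = (\<Sum>t<?d. cross (vtx vs t) (vtx vs (Suc t))) + cross (vtx vs ?d) (vtx vs 0)"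
      by (simp only: sum.lessThan_Suc vn)
    finally show ?thesis unfolding F.R2_def by simp
  qed
  have sumD: "(\<Sum>t\<le>?d. cross (vtx vs t - vtx vs 0) (vtx vs (Suc t) - vtx vs 0)) = shoelace vs"
  proof -
    have "(\<Sum>t\<le>?d. cross (vtx vs t - vtx vs 0) (vtx vs (Suc t) - vtx vs 0)) = (\<Sum>t\<le>?d. cross (F.p t - vtx vs 0) (F.p (Suc t) - vtx vs 0))"
    proof (intro sum.cong refl)
      fix t assume "t \<in> {..?d}"
      then have "t \<le> ?n" "Suc t \<le> ?n" using n by auto
      then show "cross (vtx vs t - vtx vs 0) (vtx vs (Suc t) - vtx vs 0) = cross (F.p t - vtx vs 0) (F.p (Suc t) - vtx vs 0)"
        by (simp only: pt)
    qed
    also have "\<dots> = shoelace vs" using F.fan_sum R2 by simp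
    finally show ?thesis .
  qed
  have Dnn: "\<And>t. t \<le> ?d \<Longrightarrow> cross (vtx vs t - vtx vs 0) (vtx vs (Suc t) - vtx vs 0) \<ge> 0"
  proof -
    fix t assume "t \<le> ?d"
    then show "cross (vtx vs t - vtx vs 0) (vtx vs (Suc t) - vtx vs 0) \<ge> 0"
    proof -
      assume a: "t \<le> ?d"
      have "Suc t \<le> ?n" using a n by linarith
      then show ?thesis using chord_nonneg[OF cpv, of t "Suc t" 0] by (simp del: cross_diff1 cross_diff2)
    qed
  qed
  have sub: "\<And>t. ?T t \<subseteq> polygon vs"
    unfolding polygon_def using n
    by (intro hull_mono) (auto intro!: vtx_in_set)
  have cT: "\<And>t. compact (?T t)" by (simp add: finite_imp_compact_convex_hull)
  have negl: "negligible (?T t \<inter> ?T t')" if tt: "t < t'" "t' \<le> ?d" for t t'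
  proof -
    let ?w = "vtx vs (Suc t) - vtx vs 0"
    have w: "?w \<noteq> 0" using vtx_neq[OF cpv, of "Suc t" 0] tt n by simp
    have A: "?T t \<subseteq> {x. cross ?w (x - vtx vs 0) \<le> 0}"
      using tri_sub[of "vtx vs t" "vtx vs 0" "vtx vs (Suc t)"] Dnn[of t] tt by auto
    have "{vtx vs 0, vtx vs t', vtx vs (Suc t')} \<subseteq> {x. 0 \<le> cross ?w (x - vtx vs 0)}"
    proof -
      have h: "Suc t \<le> t'" "t' \<le> ?n" "Suc t' \<le> ?n" "Suc t \<le> Suc t'" using tt n by linarith+
      show ?thesis
        using chord_nonneg[OF cpv, of "Suc t" t' 0, OF h(1)] chord_nonneg[OF cpv, of "Suc t" "Suc t'" 0, OF h(4)] h
        by (simp del: cross_diff1 cross_diff2)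
    qed
    then have B: "?T t' \<subseteq> {x. 0 \<le> cross ?w (x - vtx vs 0)}"
      by (intro hull_minimal halfplane_convex)
    have "?T t \<inter> ?T t' \<subseteq> {x. cross ?w (x - vtx vs 0) = 0}"
    proof
      fix x assume "x \<in> ?T t \<inter> ?T t'"
      then have "cross ?w (x - vtx vs 0) \<le> 0" "0 \<le> cross ?w (x - vtx vs 0)" using A B by blast+
      then show "x \<in> {x. cross ?w (x - vtx vs 0) = 0}" by simp
    qed
    then show ?thesis using negl_line[OF w] negligible_subset by blast
  qed
  have "measure lebesgue (\<Union>(?T ` {..?d})) = (\<Sum>t\<le>?d. measure lebesgue (?T t))"
  proof (rule measure_negligible_finite_Union_image)
    show "pairwise (\<lambda>x y. negligible (?T x \<inter> ?T y)) {..?d}"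
      unfolding pairwise_def
    proof (intro ballI impI)
      fix x y assume "x \<in> {..?d}" "y \<in> {..?d}" "x \<noteq> y"
      then show "negligible (?T x \<inter> ?T y)"
        using negl[of x y] negl[of y x] by (cases "x < y") (auto simp: Int_commute)
    qed
  qed (auto intro: lmeasurable_compact cT)
  also have "\<dots> = (\<Sum>t\<le>?d. cross (vtx vs t - vtx vs 0) (vtx vs (Suc t) - vtx vs 0) / 2)"
  proof (intro sum.cong refl)
    fix t assume "t \<in> {..?d}"
    then have "cross (vtx vs t - vtx vs 0) (vtx vs (Suc t) - vtx vs 0) \<ge> 0" using Dnn by simp
    then show "measure lebesgue (?T t) = cross (vtx vs t - vtx vs 0) (vtx vs (Suc t) - vtx vs 0) / 2"
      by (simp only: tri_measure abs_of_nonneg)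
  qed
  also have "\<dots> = shoelace vs / 2" by (simp only: sum_divide_distrib[symmetric] sumD)
  finally have eq: "measure lebesgue (\<Union>(?T ` {..?d})) = shoelace vs / 2" .
  have "measure lebesgue (\<Union>(?T ` {..?d})) \<le> measure lebesgue (polygon vs)"
    by (rule measure_mono_fmeasurable) (use sub in \<open>auto intro: compact_sets_lebesgue compact_UN cT lmeasurable_compact polygon_compact\<close>)
  then show ?thesis using eq by simp
qed




lemma sum_split_nat: fixes g :: "nat \<Rightarrow> real" and a b :: nat
  shows "(\<Sum>t<a + b. g t) = (\<Sum>t<a. g t) + (\<Sum>t<b. g (a + t))"
  by (induction b) (simp_all add: add.assoc)

lemma sum_shift_periodic:
  fixes f :: "nat \<Rightarrow> real"
  assumes per: "\<And>k. f (k + n) = f k"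
  shows "(\<Sum>t<n. f (I + t)) = (\<Sum>t<n. f t)"
proof (induction I)
  case 0 then show ?case by simp
next
  case (Suc I)
  have "(\<Sum>t<n. f (Suc I + t)) = (\<Sum>t<n. f (I + Suc t))" by simp
  also have "\<dots> = (\<Sum>t<Suc n. f (I + t)) - f I"
    by (simp only: sum.lessThan_Suc_shift) simp
  also have "\<dots> = (\<Sum>t<n. f (I + t)) + f (I + n) - f I" by simp
  also have "\<dots> = (\<Sum>t<n. f (I + t))" using per[of I] by simp
  finally show ?case using Suc by simp
qed

lemma area_formula:
  assumes F: "fanconf vs I d l m P P'" and dn: "d = length vs \<Longrightarrow> m \<le> l" and neq: "P \<noteq> P'"
  shows "measure lebesgue (polygon vs \<inter> {x. cross (P' - P) (x - P) > 0})
       - measure lebesgue (polygon vs \<inter> {x. cross (P' - P) (x - P) < 0})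
       = shoelace vs / 2 - fanconf.R2 vs I d P P'"
proof -
  interpret F1: fanconf vs I d l m P P' by (rule F)
  let ?n = "length vs"
  have cpv: "convex_polygon_vertices vs" by (rule F1.cpv)
  have ee: "I + d + (?n - d) = I + ?n" using F1.d by simp
  have vI: "vtx vs (I + d + (?n - d)) = vtx vs I" unfolding ee by simp
  have vSI: "vtx vs (Suc (I + d + (?n - d))) = vtx vs (Suc I)" unfolding ee
    by (metis add_Suc vtx_add_n)
  interpret F2: fanconf vs "I + d" "?n - d" m l P' P
  proof
    show "P' = vtx vs (I + d) + m *\<^sub>R (vtx vs (Suc (I + d)) - vtx vs (I + d))" by (rule F1.P')
    show "P = vtx vs (I + d + (?n - d)) + l *\<^sub>R (vtx vs (Suc (I + d + (?n - d))) - vtx vs (I + d + (?n - d)))"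
      unfolding vI vSI by (rule F1.P)
    show "?n - d = 0 \<Longrightarrow> m \<le> l" using dn F1.d by simp
    show "convex_polygon_vertices vs" by (rule F1.cpv)
    show "0 \<le> m" "m \<le> 1" using F1.m by auto
    show "0 \<le> l" "l \<le> 1" using F1.l by auto
    show "?n - d \<le> ?n" by simp
  qed
  let ?Q = "polygon vs"
  let ?g = "\<lambda>x. cross (P' - P) (x - P)"
  have setEq: "{x. cross (P - P') (x - P') < 0} = {x. ?g x > 0}"
    by (auto simp: cross_def algebra_simps)
  have Am: "measure lebesgue (?Q \<inter> {x. ?g x < 0}) \<le> F1.R2 / 2" by (rule F1.fan_measure)
  have Ap: "measure lebesgue (?Q \<inter> {x. ?g x > 0}) \<le> F2.R2 / 2"
    using F2.fan_measure unfolding setEq .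
  have Rsum: "F1.R2 + F2.R2 = shoelace vs"
  proof -
    let ?f = "\<lambda>k. cross (vtx vs k) (vtx vs (Suc k))"
    have per: "\<And>k. ?f (k + ?n) = ?f k"
    proof -
      fix k show "?f (k + ?n) = ?f k" using vtx_add_n[of vs "Suc k"] by simp
    qed
    have "(\<Sum>t<d. ?f (I + t)) + (\<Sum>t<?n - d. ?f (I + d + t)) = (\<Sum>t<d + (?n - d). ?f (I + t))"
      by (simp add: sum_split_nat add.assoc)
    also have "\<dots> = (\<Sum>t<?n. ?f (I + t))" using F1.d by simp
    also have "\<dots> = shoelace vs" unfolding shoelace_def by (rule sum_shift_periodic[where f = ?f, OF per])
    finally have s: "(\<Sum>t<d. ?f (I + t)) + (\<Sum>t<?n - d. ?f (I + d + t)) = shoelace vs" .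
    show ?thesis unfolding F1.R2_def F2.R2_def vI using s cross_anti[of P' P] by linarith
  qed
  have low: "shoelace vs / 2 \<le> measure lebesgue ?Q" by (rule poly_lower[OF cpv])
  have w: "P' - P \<noteq> 0" using neq by (metis right_minus_eq)
  have negl: "negligible (?Q \<inter> {x. ?g x = 0})"
    by (rule negligible_subset[OF negl_line[of "P' - P" P, OF w]]) blast
  have m0: "?Q \<inter> {x. ?g x = 0} \<in> sets lebesgue" "measure lebesgue (?Q \<inter> {x. ?g x = 0}) = 0"
  proof -
    have "?Q \<inter> {x. ?g x = 0} \<in> lmeasurable \<and> measure lebesgue (?Q \<inter> {x. ?g x = 0}) = 0"
      using negl unfolding negligible_iff_measure .
    then show "?Q \<inter> {x. ?g x = 0} \<in> sets lebesgue" "measure lebesgue (?Q \<inter> {x. ?g x = 0}) = 0"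
      using fmeasurableD by auto
  qed
  have mp: "?Q \<inter> {x. ?g x > 0} \<in> sets lebesgue"
    by (intro sets.Int compact_sets_lebesgue polygon_compact open_sets_lebesgue open_cross_gt)
  have mm: "?Q \<inter> {x. ?g x < 0} \<in> sets lebesgue"
    by (intro sets.Int compact_sets_lebesgue polygon_compact open_sets_lebesgue open_cross_lt)
  have split: "?Q = (?Q \<inter> {x. ?g x > 0}) \<union> (?Q \<inter> {x. ?g x < 0}) \<union> (?Q \<inter> {x. ?g x = 0})"
    by (auto simp del: cross_diff1 cross_diff2 simp: linorder_neq_iff)
  have "measure lebesgue ?Q \<le> measure lebesgue ((?Q \<inter> {x. ?g x > 0}) \<union> (?Q \<inter> {x. ?g x < 0})) + measure lebesgue (?Q \<inter> {x. ?g x = 0})"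
  proof -
    have "measure lebesgue ?Q = measure lebesgue ((?Q \<inter> {x. ?g x > 0}) \<union> (?Q \<inter> {x. ?g x < 0}) \<union> (?Q \<inter> {x. ?g x = 0}))"
      by (rule arg_cong[OF split])
    also have "\<dots> \<le> measure lebesgue ((?Q \<inter> {x. ?g x > 0}) \<union> (?Q \<inter> {x. ?g x < 0})) + measure lebesgue (?Q \<inter> {x. ?g x = 0})"
      by (rule measure_Un_le) (use mp mm m0 in auto)
    finally show ?thesis .
  qed
  also have "\<dots> \<le> measure lebesgue (?Q \<inter> {x. ?g x > 0}) + measure lebesgue (?Q \<inter> {x. ?g x < 0})"
    using measure_Un_le[OF mp mm] m0(2) by simp
  finally have up: "measure lebesgue ?Q \<le> measure lebesgue (?Q \<inter> {x. ?g x > 0}) + measure lebesgue (?Q \<inter> {x. ?g x < 0})" .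
  show ?thesis using Am Ap Rsum low up by linarith
qed




lemma edge_len_pos: "convex_polygon_vertices vs \<Longrightarrow> edge_len vs k > 0"
proof -
  assume cpv: "convex_polygon_vertices vs"
  have "vtx vs (k + 1) \<noteq> vtx vs k" using vtx_neq[OF cpv, of 1 k] cpv_len[OF cpv] by linarith
  then show ?thesis unfolding edge_len_def by simp
qed

lemma edge_len_per[simp]: "edge_len vs (k + length vs) = edge_len vs k"
proof -
  have "Suc (k + length vs) = Suc k + length vs" by simp
  then show ?thesis unfolding edge_len_def by (simp only: vtx_add_n)
qed

lemma edge_len_mod: "edge_len vs (k mod length vs) = edge_len vs k"
  unfolding edge_len_def by (simp add: vtx_def mod_Suc_eq)

lemma cum_Suc: "cum_len vs (Suc K) = cum_len vs K + edge_len vs K"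
  by (simp add: cum_len_def)

lemma cum_0[simp]: "cum_len vs 0 = 0" by (simp add: cum_len_def)

lemma cum_add_n: "cum_len vs (K + length vs) = cum_len vs K + perimeter vs"
proof -
  have "cum_len vs (length vs + K) = perimeter vs + (\<Sum>t<K. edge_len vs (length vs + t))"
    unfolding cum_len_def perimeter_def by (rule sum_split_nat)
  also have "(\<Sum>t<K. edge_len vs (length vs + t)) = cum_len vs K"
    unfolding cum_len_def by (simp add: add.commute)
  finally show ?thesis by (simp add: add.commute)
qed

lemma cum_mono_strict:
  assumes cpv: "convex_polygon_vertices vs" and "a < b" shows "cum_len vs a < cum_len vs b"
  using assms(2)
proof (induction b)
  case 0 then show ?case by simp
next
  case (Suc b)
  have "cum_len vs b < cum_len vs (Suc b)" using edge_len_pos[OF cpv, of b] by (simp add: cum_Suc)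
  then show ?case using Suc by (cases "a = b") auto
qed

lemma cum_mono:
  assumes cpv: "convex_polygon_vertices vs" and "a \<le> b" shows "cum_len vs a \<le> cum_len vs b"
  using cum_mono_strict[OF cpv] assms(2) by (cases "a = b") (auto intro: less_imp_le)

lemma cum_mono_rev:
  assumes cpv: "convex_polygon_vertices vs" and "cum_len vs a < cum_len vs b" shows "a < b"
  using cum_mono[OF cpv, of b a] assms(2) by (meson not_le)

lemma perim_pos: "convex_polygon_vertices vs \<Longrightarrow> perimeter vs > 0"
proof -
  assume cpv: "convex_polygon_vertices vs"
  have "0 < length vs" using cpv_len[OF cpv] by linarith
  then show ?thesis unfolding perimeter_def using cum_mono_strict[OF cpv, of 0 "length vs"] by simp
qed

lemma cum_decomp: "cum_len vs (r + q * length vs) = real q * perimeter vs + cum_len vs r"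
proof (induction q)
  case 0 then show ?case by simp
next
  case (Suc q)
  have "r + Suc q * length vs = (r + q * length vs) + length vs" by simp
  then show ?case using Suc cum_add_n[of vs "r + q * length vs"] by (simp add: algebra_simps)
qed

lemma cum_div_mod: "cum_len vs K = real (K div length vs) * perimeter vs + cum_len vs (K mod length vs)"
  using cum_decomp[of vs "K mod length vs" "K div length vs"] by simp

lemma find_seg:
  assumes cpv: "convex_polygon_vertices vs" and "0 \<le> x" "x < cum_len vs N"
  shows "\<exists>K<N. cum_len vs K \<le> x \<and> x < cum_len vs (Suc K)"
  using assms(3)
proof (induction N)
  case 0 then show ?case using assms(2) by simp
next
  case (Suc N)
  show ?case
  proof (cases "x < cum_len vs N")
    case True then show ?thesis using Suc by (meson less_SucI)
  next
    case False then show ?thesis using Suc by auto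
  qed
qed

lemma bdry_half_open:
  assumes cpv: "convex_polygon_vertices vs" and u: "cum_len vs K \<le> u" "u < cum_len vs (Suc K)"
  shows "bdry_point vs u = vtx vs K + ((u - cum_len vs K) / edge_len vs K) *\<^sub>R (vtx vs (Suc K) - vtx vs K)"
proof -
  let ?n = "length vs" and ?L = "perimeter vs"
  have n: "?n > 0" using cpv_len[OF cpv] by linarith
  have L: "?L > 0" by (rule perim_pos[OF cpv])
  define q where "q = K div ?n"
  define k where "k = K mod ?n"
  have k: "k < ?n" unfolding k_def using n by simp
  have cK: "cum_len vs K = real q * ?L + cum_len vs k"
    unfolding q_def k_def by (rule cum_div_mod)
  have eK: "edge_len vs K = edge_len vs k" unfolding k_def by (simp add: edge_len_mod)
  have cSk: "cum_len vs (Suc k) = cum_len vs k + edge_len vs k" by (rule cum_Suc)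
  have cSkL: "cum_len vs (Suc k) \<le> ?L"
    unfolding perimeter_def using k by (intro cum_mono[OF cpv]) simp
  have ck0: "0 \<le> cum_len vs k" using cum_mono[OF cpv, of 0 k] by simp
  have t1: "real q * ?L + cum_len vs k \<le> u" using u cK by simp
  have t2: "u < real q * ?L + cum_len vs (Suc k)" using u cK cSk eK by (simp add: cum_Suc)
  have fl: "\<lfloor>u / ?L\<rfloor> = int q"
  proof (rule floor_unique)
    have "real q * ?L \<le> u" using t1 ck0 by linarith
    then show "of_int (int q) \<le> u / ?L" using L by (simp add: field_simps)
    have "u < (real q + 1) * ?L" using t2 cSkL by (simp add: algebra_simps)
    then show "u / ?L < of_int (int q) + 1" using L by (simp add: field_simps)
  qed
  define t where "t = u - ?L * of_int \<lfloor>u / ?L\<rfloor>"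
  have t: "t = u - real q * ?L" unfolding t_def fl by simp
  have g: "(GREATEST k'. k' < ?n \<and> cum_len vs k' \<le> t) = k"
  proof (rule Greatest_equality)
    show "k < ?n \<and> cum_len vs k \<le> t" using k t t1 by simp
    fix y assume y: "y < ?n \<and> cum_len vs y \<le> t"
    show "y \<le> k"
    proof (rule ccontr)
      assume "\<not> y \<le> k"
      then have "Suc k \<le> y" by simp
      then have "cum_len vs (Suc k) \<le> cum_len vs y" by (rule cum_mono[OF cpv])
      then show False using y t t2 by simp
    qed
  qed
  have vk: "vtx vs k = vtx vs K" unfolding k_def by (rule vtx_mod)
  have vSk: "vtx vs (Suc k) = vtx vs (Suc K)" unfolding k_def by (simp add: vtx_def mod_Suc_eq)
  have tk: "t - cum_len vs k = u - cum_len vs K" using t cK by simp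
  show ?thesis
    unfolding bdry_point_def Let_def t_def[symmetric] g
    by (simp only: tk vk vSk eK)
qed

lemma bdry_formula:
  assumes cpv: "convex_polygon_vertices vs" and u: "cum_len vs K \<le> u" "u \<le> cum_len vs (Suc K)"
  shows "bdry_point vs u = vtx vs K + ((u - cum_len vs K) / edge_len vs K) *\<^sub>R (vtx vs (Suc K) - vtx vs K)"
proof (cases "u < cum_len vs (Suc K)")
  case True then show ?thesis using bdry_half_open[OF cpv u(1)] by simp
next
  case False
  then have uS: "u = cum_len vs (Suc K)" using u by simp
  have "cum_len vs (Suc K) < cum_len vs (Suc (Suc K))" by (rule cum_mono_strict[OF cpv]) simp
  then have "bdry_point vs u = vtx vs (Suc K)"
    using bdry_half_open[OF cpv, of "Suc K" u] uS by simp
  moreover have "(u - cum_len vs K) / edge_len vs K = 1"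
    using uS edge_len_pos[OF cpv, of K] by (simp add: cum_Suc)
  ultimately show ?thesis by simp
qed

lemma bdry_periodic:
  assumes cpv: "convex_polygon_vertices vs"
  shows "bdry_point vs (u + of_int j * perimeter vs) = bdry_point vs u"
proof -
  let ?L = "perimeter vs"
  have L: "?L > 0" by (rule perim_pos[OF cpv])
  have "(u + of_int j * ?L) / ?L = u / ?L + of_int j" using L by (simp add: field_simps)
  then have fl: "\<lfloor>(u + of_int j * ?L) / ?L\<rfloor> = \<lfloor>u / ?L\<rfloor> + j" by simp
  have eq: "u + of_int j * ?L - ?L * of_int \<lfloor>(u + of_int j * ?L) / ?L\<rfloor> = u - ?L * of_int \<lfloor>u / ?L\<rfloor>"
    unfolding fl by (simp add: algebra_simps)
  show ?thesis unfolding bdry_point_def Let_def by (simp only: eq)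
qed

lemma area_diff_shift:
  assumes cpv: "convex_polygon_vertices vs"
  shows "area_diff vs (s0 + of_int j * perimeter vs) s = area_diff vs s0 s"
proof -
  have a: "s0 + of_int j * perimeter vs + s = (s0 + s) + of_int j * perimeter vs" by simp
  have b: "s0 + of_int j * perimeter vs + s + perimeter vs / 2 = (s0 + s + perimeter vs / 2) + of_int j * perimeter vs" by simp
  have A: "bdry_point vs (s0 + of_int j * perimeter vs + s) = bdry_point vs (s0 + s)"
    unfolding a by (rule bdry_periodic[OF cpv])
  have B: "bdry_point vs (s0 + of_int j * perimeter vs + s + perimeter vs / 2) = bdry_point vs (s0 + s + perimeter vs / 2)"
    unfolding b by (rule bdry_periodic[OF cpv])
  show ?thesis unfolding area_diff_def Let_def by (simp only: A B)
qed




lemma zeroset_pieces: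
  fixes f :: "real \<Rightarrow> real" and B :: "real set"
  assumes finB: "finite B" and lohi: "lo \<le> hi"
    and piece: "\<And>c d. lo \<le> c \<Longrightarrow> c < d \<Longrightarrow> d \<le> hi \<Longrightarrow> (\<And>x. c < x \<Longrightarrow> x < d \<Longrightarrow> x \<notin> B) \<Longrightarrow>
        finite {x\<in>{c..d}. f x = 0} \<or> (\<forall>x\<in>{c..d}. f x = 0)"
  shows "\<exists>F I. finite F \<and> finite I \<and> (\<forall>(a, b)\<in>I. a \<le> b) \<and>
           {x \<in> {lo..hi}. f x = 0} = F \<union> (\<Union>(a, b)\<in>I. {a..b})"
proof -
  define B' where "B' = (B \<inter> {lo..hi}) \<union> {lo, hi}"
  have finB': "finite B'" unfolding B'_def using finB by simp
  have B'sub: "B' \<subseteq> {lo..hi}" unfolding B'_def using lohi by auto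
  define Pr where "Pr = {(c, d). c \<in> B' \<and> d \<in> B' \<and> c < d \<and> (\<forall>x. c < x \<and> x < d \<longrightarrow> x \<notin> B')}"
  have finPr: "finite Pr"
  proof (rule finite_subset)
    show "Pr \<subseteq> B' \<times> B'" unfolding Pr_def by auto
    show "finite (B' \<times> B')" using finB' by simp
  qed
  define zs where "zs = (\<lambda>p. {x\<in>{fst p..snd p}. f x = 0})"
  define Z where "Z = {x \<in> {lo..hi}. f x = 0}"
  define F where "F = (Z \<inter> B') \<union> (\<Union>p\<in>{p\<in>Pr. finite (zs p)}. zs p)"
  define I where "I = {p\<in>Pr. \<forall>x\<in>{fst p..snd p}. f x = 0}"
  have hprop: "lo \<le> c \<and> c < d \<and> d \<le> hi \<and> (\<forall>x. c < x \<and> x < d \<longrightarrow> x \<notin> B)" if "(c, d) \<in> Pr" for c d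
  proof -
    have c: "c \<in> B'" "d \<in> B'" "c < d" "\<forall>x. c < x \<and> x < d \<longrightarrow> x \<notin> B'" using that unfolding Pr_def by auto
    then have "lo \<le> c" "d \<le> hi" using B'sub by auto
    moreover have "\<forall>x. c < x \<and> x < d \<longrightarrow> x \<notin> B"
      using c \<open>lo \<le> c\<close> \<open>d \<le> hi\<close> unfolding B'_def by auto
    ultimately show ?thesis using c by auto
  qed
  have pc: "finite (zs (c, d)) \<or> (\<forall>x\<in>{c..d}. f x = 0)" if "(c, d) \<in> Pr" for c d
    using piece[of c d] hprop[OF that] unfolding zs_def by auto
  have finF: "finite F" unfolding F_def using finB' finPr by auto
  have finI: "finite I" unfolding I_def using finPr by auto
  have ord: "\<forall>(a, b)\<in>I. a \<le> b" unfolding I_def Pr_def by auto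
  have "Z = F \<union> (\<Union>(a, b)\<in>I. {a..b})"
  proof
    show "Z \<subseteq> F \<union> (\<Union>(a, b)\<in>I. {a..b})"
    proof
      fix x assume xZ: "x \<in> Z"
      show "x \<in> F \<union> (\<Union>(a, b)\<in>I. {a..b})"
      proof (cases "x \<in> B'")
        case True then show ?thesis using xZ unfolding F_def by auto
      next
        case False
        have x: "lo < x" "x < hi" using xZ False unfolding Z_def B'_def by auto
        define c where "c = Max {b\<in>B'. b < x}"
        define d where "d = Min {b\<in>B'. x < b}"
        have ne1: "{b\<in>B'. b < x} \<noteq> {}" using x unfolding B'_def by auto
        have ne2: "{b\<in>B'. x < b} \<noteq> {}" using x unfolding B'_def by auto
        have fin1: "finite {b\<in>B'. b < x}" "finite {b\<in>B'. x < b}" using finB' by auto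
        have c: "c \<in> B'" "c < x" using Max_in[OF fin1(1) ne1] unfolding c_def by auto
        have d: "d \<in> B'" "x < d" using Min_in[OF fin1(2) ne2] unfolding d_def by auto
        have cmax: "\<And>b. b \<in> B' \<Longrightarrow> b < x \<Longrightarrow> b \<le> c" unfolding c_def using fin1(1) by auto
        have dmin: "\<And>b. b \<in> B' \<Longrightarrow> x < b \<Longrightarrow> d \<le> b" unfolding d_def using fin1(2) by auto
        have nb: "\<forall>y. c < y \<and> y < d \<longrightarrow> y \<notin> B'"
        proof (intro allI impI notI)
          fix y assume y: "c < y \<and> y < d" "y \<in> B'"
          show False
          proof (cases "y < x")
            case True then show False using cmax[OF y(2)] y by simp
          next
            case False
            then have "x < y \<or> x = y" by auto
            then show False using dmin[OF y(2)] y \<open>x \<notin> B'\<close> by auto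
          qed
        qed
        have "(c, d) \<in> Pr" unfolding Pr_def using c d nb by auto
        then have cases: "finite (zs (c, d)) \<or> (\<forall>x\<in>{c..d}. f x = 0)" by (rule pc)
        have xzs: "x \<in> zs (c, d)" using xZ c d unfolding zs_def Z_def by auto
        show ?thesis
        proof (cases "finite (zs (c, d))")
          case True
          then show ?thesis using \<open>(c, d) \<in> Pr\<close> xzs unfolding F_def by blast
        next
          case False
          then have "(c, d) \<in> I" using cases \<open>(c, d) \<in> Pr\<close> unfolding I_def by auto
          then show ?thesis using c d by fastforce
        qed
      qed
    qed
    show "F \<union> (\<Union>(a, b)\<in>I. {a..b}) \<subseteq> Z"
    proof
      fix x assume "x \<in> F \<union> (\<Union>(a, b)\<in>I. {a..b})"
      then consider "x \<in> Z" | p where "p \<in> Pr" "x \<in> zs p" | p where "p \<in> I" "x \<in> {fst p..snd p}"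
        unfolding F_def by auto
      then show "x \<in> Z"
      proof cases
        case 1 then show ?thesis .
      next
        case 2
        obtain c d where p: "p = (c, d)" by (cases p)
        then show ?thesis using 2 hprop[of c d] unfolding zs_def Z_def by auto
      next
        case 3
        obtain c d where p: "p = (c, d)" by (cases p)
        have "(c, d) \<in> Pr" using 3 p unfolding I_def by auto
        then show ?thesis using 3 p hprop[of c d] unfolding I_def Z_def by auto
      qed
    qed
  qed
  then show ?thesis using finF finI ord unfolding Z_def by blast
qed

lemma quad_zero:
  fixes f :: "real \<Rightarrow> real"
  assumes f: "\<And>s. f s = A + B * s + C * s^2"
  shows "finite {s. f s = 0} \<or> (\<forall>s. f s = 0)"
proof -
  define c where "c = (\<lambda>i::nat. if i = 0 then A else if i = 1 then B else C)"
  have e: "\<And>s. (\<Sum>i\<le>2. c i * s^i) = f s"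
    unfolding f c_def by (simp add: numeral_2_eq_2)
  show ?thesis
  proof (cases "\<exists>k. k \<le> 2 \<and> c k \<noteq> 0")
    case True
    then have "finite {z. (\<Sum>i\<le>2. c i * z^i) = 0}" using polyfun_finite_roots by blast
    then show ?thesis unfolding e by simp
  next
    case False
    then have "c 0 = 0" "c 1 = 0" "c 2 = 0" by auto
    then have "A = 0" "B = 0" "C = 0" unfolding c_def by auto
    then show ?thesis using f by simp
  qed
qed

lemma aff_zero:
  fixes a b :: "real^2"
  shows "finite {s::real. a + s *\<^sub>R b = 0} \<or> (\<forall>s. a + s *\<^sub>R b = 0)"
proof (cases "b = 0")
  case True then show ?thesis by (cases "a = 0") auto
next
  case False
  show ?thesis
  proof (cases "{s::real. a + s *\<^sub>R b = 0} = {}")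
    case True then show ?thesis by simp
  next
    case ne: False
    then obtain s1 where s1: "a + s1 *\<^sub>R b = 0" by auto
    have "{s::real. a + s *\<^sub>R b = 0} \<subseteq> {s1}"
    proof
      fix s assume "s \<in> {s::real. a + s *\<^sub>R b = 0}"
      then have "a + s *\<^sub>R b = 0" by simp
      then have "s *\<^sub>R b = s1 *\<^sub>R b" using s1 by (metis add_left_cancel)
      then show "s \<in> {s1}" using False by simp
    qed
    then show ?thesis using finite_subset by blast
  qed
qed




lemma affine_param:
  assumes "e > 0"
  shows "vtx vs K + ((s0 + s - c) / e) *\<^sub>R w = (vtx vs K + ((s0 - c) / e) *\<^sub>R w) + s *\<^sub>R ((1 / e) *\<^sub>R w)"
proof -
  have "(s0 + s - c) / e = (s0 - c) / e + s * (1 / e)" using assms by (simp add: field_simps)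
  then show ?thesis by (simp add: scaleR_add_left algebra_simps)
qed

lemma quad_expr:
  "\<exists>A B C. \<forall>s::real. k0 + cross v (a1 + s *\<^sub>R b1) - cross w (a2 + s *\<^sub>R b2) - cross (a2 + s *\<^sub>R b2) (a1 + s *\<^sub>R b1)
      = A + B * s + C * s^2"
  apply (rule exI[of _ "k0 + cross v a1 - cross w a2 - cross a2 a1"])
  apply (rule exI[of _ "cross v b1 - cross w b2 - cross a2 b1 - cross b2 a1"])
  apply (rule exI[of _ "- cross b2 b1"])
  by (simp add: algebra_simps power2_eq_square)

lemma piece:
  assumes cpv: "convex_polygon_vertices vs"
    and s0: "0 \<le> s0" "s0 < perimeter vs"
    and cd: "0 \<le> c" "c < d" "d \<le> perimeter vs"
    and nob: "\<And>x. c < x \<Longrightarrow> x < d \<Longrightarrow>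
       x \<notin> (\<lambda>K. cum_len vs K - s0) ` {..<3 * length vs} \<union> (\<lambda>K. cum_len vs K - s0 - perimeter vs / 2) ` {..<3 * length vs}"
  shows "finite {s\<in>{c..d}. area_diff vs s0 s = 0} \<or> (\<forall>s\<in>{c..d}. area_diff vs s0 s = 0)"
proof -
  let ?n = "length vs" and ?L = "perimeter vs"
  have L: "?L > 0" by (rule perim_pos[OF cpv])
  have c3: "cum_len vs (3 * ?n) = 3 * ?L" using cum_decomp[of vs 0 3] by simp
  have mid: "c < (c + d) / 2" "(c + d) / 2 < d" using cd by (simp_all add: field_simps)
  have L2: "?L / 2 > 0" using L by simp
  define x where "x = s0 + (c + d) / 2"
  have x1: "0 \<le> x" unfolding x_def using s0 cd L by (simp add: field_simps)
  have x2: "x < cum_len vs (3 * ?n)" unfolding x_def c3 using s0 cd L by (simp add: field_simps)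
  note x = x1 x2
  obtain K where K: "K < 3 * ?n" "cum_len vs K \<le> x" "x < cum_len vs (Suc K)"
    using find_seg[OF cpv x] by blast
  have hK1: "cum_len vs K \<le> s0 + c"
  proof (rule ccontr)
    assume "\<not> ?thesis"
    then have "c < cum_len vs K - s0" "cum_len vs K - s0 < d" using K cd mid unfolding x_def by linarith+
    then show False using nob K(1) by blast
  qed
  have hK2: "s0 + d \<le> cum_len vs (Suc K)"
  proof (rule ccontr)
    assume "\<not> ?thesis"
    then have a: "c < cum_len vs (Suc K) - s0" "cum_len vs (Suc K) - s0 < d" using K cd mid unfolding x_def by linarith+
    have "cum_len vs (Suc K) < cum_len vs (3 * ?n)" using a s0 cd c3 L L2 by linarith
    then have "Suc K < 3 * ?n" by (rule cum_mono_rev[OF cpv])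
    then show False using nob a by blast
  qed
  define x' where "x' = x + ?L / 2"
  have x1': "0 \<le> x'" unfolding x'_def x_def using s0 cd L by (simp add: field_simps)
  have x2': "x' < cum_len vs (3 * ?n)" unfolding x'_def x_def c3 using s0 cd L by (simp add: field_simps)
  note x' = x1' x2'
  obtain J where J: "J < 3 * ?n" "cum_len vs J \<le> x'" "x' < cum_len vs (Suc J)"
    using find_seg[OF cpv x'] by blast
  have hJ1: "cum_len vs J \<le> s0 + c + ?L / 2"
  proof (rule ccontr)
    assume "\<not> ?thesis"
    then have "c < cum_len vs J - s0 - ?L / 2" "cum_len vs J - s0 - ?L / 2 < d" using J cd mid unfolding x'_def x_def by linarith+
    then show False using nob J(1) by blast
  qed
  have hJ2: "s0 + d + ?L / 2 \<le> cum_len vs (Suc J)"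
  proof (rule ccontr)
    assume "\<not> ?thesis"
    then have a: "c < cum_len vs (Suc J) - s0 - ?L / 2" "cum_len vs (Suc J) - s0 - ?L / 2 < d" using J cd mid unfolding x'_def x_def by linarith+
    have "cum_len vs (Suc J) < cum_len vs (3 * ?n)" using a s0 cd c3 L L2 by linarith
    then have "Suc J < 3 * ?n" by (rule cum_mono_rev[OF cpv])
    then show False using nob a by blast
  qed
  have KJ: "K \<le> J"
  proof (rule ccontr)
    assume "\<not> K \<le> J"
    then have "Suc J \<le> K" by simp
    then have "cum_len vs (Suc J) \<le> cum_len vs K" by (rule cum_mono[OF cpv])
    then show False using hJ2 hK1 cd L by linarith
  qed
  have JK: "J \<le> K + ?n"
  proof (rule ccontr)
    assume "\<not> J \<le> K + ?n"
    then have "Suc K + ?n \<le> J" by simp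
    then have "cum_len vs (Suc K + ?n) \<le> cum_len vs J" by (rule cum_mono[OF cpv])
    then have "cum_len vs (Suc K) + ?L \<le> cum_len vs J" by (simp only: cum_add_n)
    then show False using hJ1 hK2 cd L by linarith
  qed
  define dd where "dd = J - K"
  have Jdd: "J = K + dd" unfolding dd_def using KJ by simp
  have ddn: "dd \<le> ?n" unfolding dd_def using JK by simp
  define eK where "eK = edge_len vs K"
  define eJ where "eJ = edge_len vs J"
  have eK: "eK > 0" unfolding eK_def by (rule edge_len_pos[OF cpv])
  have eJ: "eJ > 0" unfolding eJ_def by (rule edge_len_pos[OF cpv])
  define l where "l = (\<lambda>s. (s0 + s - cum_len vs K) / eK)"
  define m where "m = (\<lambda>s. (s0 + s + ?L / 2 - cum_len vs J) / eJ)"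
  define Pf where "Pf = (\<lambda>s. bdry_point vs (s0 + s))"
  define Pf' where "Pf' = (\<lambda>s. bdry_point vs (s0 + s + ?L / 2))"
  have cSK: "cum_len vs (Suc K) = cum_len vs K + eK" unfolding eK_def by (rule cum_Suc)
  have cSJ: "cum_len vs (Suc J) = cum_len vs J + eJ" unfolding eJ_def by (rule cum_Suc)
  have Pfs: "Pf s = vtx vs K + l s *\<^sub>R (vtx vs (Suc K) - vtx vs K)" if s: "s \<in> {c..d}" for s
    unfolding Pf_def l_def eK_def using s hK1 hK2 by (intro bdry_formula[OF cpv]) auto
  have Pfs': "Pf' s = vtx vs J + m s *\<^sub>R (vtx vs (Suc J) - vtx vs J)" if s: "s \<in> {c..d}" for s
    unfolding Pf'_def m_def eJ_def using s hJ1 hJ2 by (intro bdry_formula[OF cpv]) auto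
  have fcs: "fanconf vs K dd (l s) (m s) (Pf s) (Pf' s)" if s: "s \<in> {c..d}" for s
  proof -
    have ls: "0 \<le> l s" "l s \<le> 1" using s hK1 hK2 eK cSK unfolding l_def by (auto simp: field_simps)
    have ms: "0 \<le> m s" "m s \<le> 1" using s hJ1 hJ2 eJ cSJ unfolding m_def by (auto simp: field_simps)
    show ?thesis
    proof
      show "convex_polygon_vertices vs" by (rule cpv)
      show "0 \<le> l s" "l s \<le> 1" "0 \<le> m s" "m s \<le> 1" using ls ms by auto
      show "dd \<le> ?n" by (rule ddn)
      show "dd = 0 \<Longrightarrow> l s \<le> m s"
      proof -
        assume "dd = 0"
        then have "J = K" using Jdd by simp
        then show "l s \<le> m s" unfolding l_def m_def eJ_def eK_def using L eK
          by (simp add: divide_right_mono eK_def)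
      qed
      show "Pf s = vtx vs K + l s *\<^sub>R (vtx vs (Suc K) - vtx vs K)" by (rule Pfs[OF s])
      show "Pf' s = vtx vs (K + dd) + m s *\<^sub>R (vtx vs (Suc (K + dd)) - vtx vs (K + dd))"
        using Pfs'[OF s] Jdd by simp
    qed
  qed
  define R where "R = (\<lambda>s. fanconf.R2 vs K dd (Pf s) (Pf' s))"
  have val: "area_diff vs s0 s = (if Pf s = Pf' s then 0 else shoelace vs / 2 - R s)"
    if s: "s \<in> {c..d}" for s
  proof (cases "Pf s = Pf' s")
    case True
    then show ?thesis unfolding area_diff_def Let_def Pf_def Pf'_def by simp
  next
    case False
    have fc: "fanconf vs K dd (l s) (m s) (Pf s) (Pf' s)" by (rule fcs[OF s])
    have dn: "dd = ?n \<Longrightarrow> m s \<le> l s"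
    proof -
      assume "dd = ?n"
      then have JKn: "J = K + ?n" using Jdd by simp
      have "eJ = eK" unfolding eJ_def eK_def JKn by simp
      moreover have "cum_len vs J = cum_len vs K + ?L" unfolding JKn by (rule cum_add_n)
      ultimately have "m s = (s0 + s - ?L / 2 - cum_len vs K) / eK" unfolding m_def by (simp add: algebra_simps)
      then show "m s \<le> l s" unfolding l_def using eK L by (simp add: divide_right_mono)
    qed
    have "area_diff vs s0 s = shoelace vs / 2 - R s"
      using area_formula[OF fc dn False] unfolding area_diff_def Let_def Pf_def Pf'_def R_def by simp
    then show ?thesis using False by simp
  qed
  define a1 where "a1 = vtx vs K + ((s0 - cum_len vs K) / eK) *\<^sub>R (vtx vs (Suc K) - vtx vs K)"
  define b1 where "b1 = (1 / eK) *\<^sub>R (vtx vs (Suc K) - vtx vs K)"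
  define a2 where "a2 = vtx vs J + ((s0 + ?L / 2 - cum_len vs J) / eJ) *\<^sub>R (vtx vs (Suc J) - vtx vs J)"
  define b2 where "b2 = (1 / eJ) *\<^sub>R (vtx vs (Suc J) - vtx vs J)"
  have P1: "Pf s = a1 + s *\<^sub>R b1" if s: "s \<in> {c..d}" for s
    unfolding Pfs[OF s] l_def a1_def b1_def using affine_param[OF eK] by simp
  have P2: "Pf' s = a2 + s *\<^sub>R b2" if s: "s \<in> {c..d}" for s
  proof -
    have eq: "(s0 + s + ?L / 2 - cum_len vs J) = (s0 + ?L / 2) + s - cum_len vs J" by simp
    show ?thesis
      unfolding Pfs'[OF s] m_def a2_def b2_def eq by (rule affine_param[OF eJ])
  qed
  define k0 where "k0 = shoelace vs / 2 - ((\<Sum>t<dd. cross (vtx vs (K + t)) (vtx vs (Suc (K + t)))))"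
  have Rs: "shoelace vs / 2 - R s = k0 + cross (vtx vs K) (a1 + s *\<^sub>R b1) - cross (vtx vs (K + dd)) (a2 + s *\<^sub>R b2)
             - cross (a2 + s *\<^sub>R b2) (a1 + s *\<^sub>R b1)" if s: "s \<in> {c..d}" for s
    unfolding R_def k0_def P1[OF s, symmetric] P2[OF s, symmetric] fanconf.R2_def[OF fcs[OF s]] by simp
  obtain A B C where ABC: "\<And>s. k0 + cross (vtx vs K) (a1 + s *\<^sub>R b1) - cross (vtx vs (K + dd)) (a2 + s *\<^sub>R b2)
             - cross (a2 + s *\<^sub>R b2) (a1 + s *\<^sub>R b1) = A + B * s + C * s^2"
    using quad_expr by blast
  define g where "g = (\<lambda>s. k0 + cross (vtx vs K) (a1 + s *\<^sub>R b1) - cross (vtx vs (K + dd)) (a2 + s *\<^sub>R b2)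
             - cross (a2 + s *\<^sub>R b2) (a1 + s *\<^sub>R b1))"
  have q: "finite {s. g s = 0} \<or> (\<forall>s. g s = 0)" by (rule quad_zero[of g A B C]) (simp only: g_def ABC)
  have a: "finite {s. (a1 - a2) + s *\<^sub>R (b1 - b2) = 0} \<or> (\<forall>s. (a1 - a2) + s *\<^sub>R (b1 - b2) = 0)"
    by (rule aff_zero)
  have Zeq: "{s\<in>{c..d}. area_diff vs s0 s = 0} =
      {s\<in>{c..d}. (a1 - a2) + s *\<^sub>R (b1 - b2) = 0} \<union> {s\<in>{c..d}. g s = 0}"
  proof (intro set_eqI iffI)
    fix s assume "s \<in> {s\<in>{c..d}. area_diff vs s0 s = 0}"
    then have s: "s \<in> {c..d}" and z: "area_diff vs s0 s = 0" by auto
    show "s \<in> {s\<in>{c..d}. (a1 - a2) + s *\<^sub>R (b1 - b2) = 0} \<union> {s\<in>{c..d}. g s = 0}"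
    proof (cases "Pf s = Pf' s")
      case True
      then have "(a1 - a2) + s *\<^sub>R (b1 - b2) = 0" using P1[OF s] P2[OF s] by (simp add: algebra_simps)
      then show ?thesis using s by simp
    next
      case False
      then have "g s = 0" using z val[OF s] Rs[OF s] unfolding g_def by simp
      then show ?thesis using s by simp
    qed
  next
    fix s assume "s \<in> {s\<in>{c..d}. (a1 - a2) + s *\<^sub>R (b1 - b2) = 0} \<union> {s\<in>{c..d}. g s = 0}"
    then have s: "s \<in> {c..d}" and z: "(a1 - a2) + s *\<^sub>R (b1 - b2) = 0 \<or> g s = 0" by auto
    show "s \<in> {s\<in>{c..d}. area_diff vs s0 s = 0}"
    proof (cases "Pf s = Pf' s")
      case True then show ?thesis using val[OF s] s by simp
    next
      case False
      then have "(a1 - a2) + s *\<^sub>R (b1 - b2) \<noteq> 0" using P1[OF s] P2[OF s] by (simp add: algebra_simps)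
      then have "g s = 0" using z by simp
      then show ?thesis using val[OF s] Rs[OF s] s False unfolding g_def by simp
    qed
  qed
  show ?thesis
  proof (cases "(\<forall>s. (a1 - a2) + s *\<^sub>R (b1 - b2) = 0) \<or> (\<forall>s. g s = 0)")
    case True
    then have "\<forall>s\<in>{c..d}. area_diff vs s0 s = 0" using Zeq by blast
    then show ?thesis by simp
  next
    case False
    then have "finite {s. (a1 - a2) + s *\<^sub>R (b1 - b2) = 0}" "finite {s. g s = 0}" using a q by auto
    then have "finite ({s\<in>{c..d}. (a1 - a2) + s *\<^sub>R (b1 - b2) = 0} \<union> {s\<in>{c..d}. g s = 0})"
      by (auto intro: finite_subset)
    then show ?thesis unfolding Zeq by simp
  qed
qed




theorem lemma2:
  fixes vs :: "(real^2) list" and s0 :: real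
  assumes "convex_polygon_vertices vs"
  shows "\<exists>F I. finite F \<and> finite I \<and> (\<forall>(a, b) \<in> I. a \<le> b) \<and>
           {s \<in> {0..perimeter vs}. area_diff vs s0 s = 0}
             = F \<union> (\<Union>(a, b) \<in> I. {a..b})"
proof -
  have cpv: "convex_polygon_vertices vs" by (rule assms)
  let ?L = "perimeter vs" and ?n = "length vs"
  have L: "?L > 0" by (rule perim_pos[OF cpv])
  define j where "j = - \<lfloor>s0 / ?L\<rfloor>"
  define s1 where "s1 = s0 + of_int j * ?L"
  have shift: "\<And>s. area_diff vs s1 s = area_diff vs s0 s"
    unfolding s1_def by (rule area_diff_shift[OF cpv])
  have s1: "0 \<le> s1" "s1 < ?L"
  proof -
    have a: "of_int \<lfloor>s0 / ?L\<rfloor> \<le> s0 / ?L" "s0 / ?L < of_int \<lfloor>s0 / ?L\<rfloor> + 1"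
      by linarith+
    have "of_int \<lfloor>s0 / ?L\<rfloor> * ?L \<le> (s0 / ?L) * ?L" using a(1) L by (intro mult_right_mono) auto
    then have "of_int \<lfloor>s0 / ?L\<rfloor> * ?L \<le> s0" using L by simp
    moreover have "(s0 / ?L) * ?L < (of_int \<lfloor>s0 / ?L\<rfloor> + 1) * ?L" using a(2) L by (intro mult_strict_right_mono) auto
    then have "s0 < (of_int \<lfloor>s0 / ?L\<rfloor> + 1) * ?L" using L by simp
    ultimately show "0 \<le> s1" "s1 < ?L" unfolding s1_def j_def by (simp_all add: algebra_simps)
  qed
  define B where "B = (\<lambda>K. cum_len vs K - s1) ` {..<3 * ?n} \<union> (\<lambda>K. cum_len vs K - s1 - ?L / 2) ` {..<3 * ?n}"
  have finB: "finite B" unfolding B_def by simp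
  have "\<exists>F I. finite F \<and> finite I \<and> (\<forall>(a, b)\<in>I. a \<le> b) \<and>
           {x \<in> {0..?L}. area_diff vs s1 x = 0} = F \<union> (\<Union>(a, b)\<in>I. {a..b})"
  proof (rule zeroset_pieces[OF finB])
    show "0 \<le> ?L" using L by simp
    fix c d assume "0 \<le> c" "c < d" "d \<le> ?L" and nb: "\<And>x. c < x \<Longrightarrow> x < d \<Longrightarrow> x \<notin> B"
    show "finite {x \<in> {c..d}. area_diff vs s1 x = 0} \<or> (\<forall>x\<in>{c..d}. area_diff vs s1 x = 0)"
      by (rule piece[OF cpv s1 \<open>0 \<le> c\<close> \<open>c < d\<close> \<open>d \<le> ?L\<close>]) (use nb in \<open>auto simp: B_def\<close>)
  qed
  then show ?thesis unfolding shift .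
qed


end
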